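(* Let $1<r<\infty$. There is $C<\infty$ (depending only on $n,r$) such that for all $x\in\mathbb{R}^n$, $t>0$ and all locally $r$-integrable $f$ on $\mathbb{R}^n$, $$\left(\frac{1}{|B(x,t)|}\int_{B(x,t)}|\mathcal{M}(f)(y)|^r\,dy\right)^{1/r}\le C\left(\frac{1}{|B(x,2t)|}\int_{B(x,2t)}|f(y)|^r\,dy\right)^{1/r}+C\,\mathcal{M}_u\!\left(\frac{1}{|B(\cdot,t)|}\int_{B(\cdot,t)}|f(z)|\,dz\right)(x).$$
   Context: $\mathcal{M}$ is the centered Hardy–Littlewood maximal operator $\mathcal{M}(f)(x)=\sup_{\tau>0}\frac{1}{|B(x,\tau)|}\int_{B(x,\tau)}|f|$, and $\mathcal{M}_u$ is the uncentered Hardy–Littlewood maximal operator (supremum of averages over all balls containing the point). *)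

theory Defs
  imports "HOL-Analysis.Analysis"
begin

definition enn_powr :: "ennreal \<Rightarrow> real \<Rightarrow> ennreal" where
  "enn_powr e p = (if e = \<infinity> then \<infinity> else ennreal (enn2real e powr p))"

definition ball_avg :: "('a::euclidean_space \<Rightarrow> ennreal) \<Rightarrow> 'a \<Rightarrow> real \<Rightarrow> ennreal" where
  "ball_avg g c s = (\<integral>\<^sup>+ y\<in>ball c s. g y \<partial>lebesgue) / emeasure lebesgue (ball c s)"

definition maximal_c :: "('a::euclidean_space \<Rightarrow> real) \<Rightarrow> 'a \<Rightarrow> ennreal" where
  "maximal_c f x = (SUP \<tau>\<in>{0<..}. ball_avg (\<lambda>y. ennreal \<bar>f y\<bar>) x \<tau>)"

definition maximal_u :: "('a::euclidean_space \<Rightarrow> ennreal) \<Rightarrow> 'a \<Rightarrow> ennreal" where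
  "maximal_u g x = (SUP p\<in>{(c, s). s > 0 \<and> x \<in> ball c s}. ball_avg g (fst p) (snd p))"

definition locally_Lp :: "real \<Rightarrow> ('a::euclidean_space \<Rightarrow> real) \<Rightarrow> bool" where
  "locally_Lp r f \<longleftrightarrow> f \<in> borel_measurable lebesgue \<and>
     (\<forall>K. compact K \<longrightarrow> (\<integral>\<^sup>+ y\<in>K. ennreal (\<bar>f y\<bar> powr r) \<partial>lebesgue) < \<infinity>)"

end

theory Submission
  imports Defs
begin
lemma bern_aux:
  fixes \<tau> d q :: real
  assumes "0 < \<tau>" "0 \<le> d" "real n * d < (1 - q) * \<tau>"
  shows "q * (\<tau> + d) ^ n < \<tau> ^ n"
proof -
  have td: "0 < \<tau> + d" using assms by simp
  have "1 + real n * (- (d / (\<tau> + d))) \<le> (1 + (- (d / (\<tau> + d)))) ^ n"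
    by (rule Bernoulli_inequality) (use assms td in \<open>simp add: field_simps\<close>)
  also have "1 + (- (d / (\<tau> + d))) = \<tau> / (\<tau> + d)" using td by (simp add: field_simps)
  finally have b: "1 - real n * d / (\<tau> + d) \<le> (\<tau> / (\<tau> + d)) ^ n" by simp
  have "real n * d / (\<tau> + d) \<le> real n * d / \<tau>"
    using assms by (intro divide_left_mono) auto
  moreover have "real n * d / \<tau> < 1 - q" using assms by (simp add: field_simps)
  ultimately have "q < (\<tau> / (\<tau> + d)) ^ n" using b by linarith
  then have "q * (\<tau> + d) ^ n < (\<tau> / (\<tau> + d)) ^ n * (\<tau> + d) ^ n"
    using td by (intro mult_strict_right_mono) auto
  also have "\<dots> = \<tau> ^ n" using td by (simp add: power_divide)
  finally show ?thesis .
qed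
definition UV :: "'a::euclidean_space itself \<Rightarrow> real" where "UV _ = measure lborel (ball (0::'a) 1)"
lemma UV_pos: "0 < UV TYPE('a::euclidean_space)"
  unfolding UV_def by (simp add: content_ball_pos)
lemma emeasure_ball_UV: "0 \<le> s \<Longrightarrow> emeasure lborel (ball (c::'a::euclidean_space) s) = ennreal (s^DIM('a) * UV TYPE('a))"
proof -
  assume s: "0 \<le> s"
  have "emeasure lborel (ball c s) = ennreal (measure lborel (ball c s))"
    using emeasure_lborel_ball_finite[of c s] by (subst emeasure_eq_ennreal_measure) auto
  then show ?thesis using content_ball_conv_unit_ball[OF s, of c] by (simp add: UV_def)
qed
lemma emeasure_lebesgue_ball_UV: "0 \<le> s \<Longrightarrow> emeasure lebesgue (ball (c::'a::euclidean_space) s) = ennreal (s^DIM('a) * UV TYPE('a))"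
  by (simp add: emeasure_ball_UV)

lemma ball_sets_borel[measurable]: "ball (c::'a::euclidean_space) s \<in> sets borel"
  by (simp add: borel_open)

definition IB :: "('a::euclidean_space \<Rightarrow> ennreal) \<Rightarrow> 'a \<Rightarrow> real \<Rightarrow> ennreal" where
  "IB g y s = (\<integral>\<^sup>+ z. g z * indicator (ball y s) z \<partial>lborel)"
definition Mx :: "('a::euclidean_space \<Rightarrow> ennreal) \<Rightarrow> 'a \<Rightarrow> ennreal" where
  "Mx g y = (SUP \<tau>\<in>{0<..}. IB g y \<tau> / emeasure lborel (ball y \<tau>))"

lemma IB_mono_set: "ball y s \<subseteq> ball y' s' \<Longrightarrow> IB g y s \<le> IB g y' s'"
  unfolding IB_def by (intro nn_integral_mono mult_left_mono) (auto simp: indicator_def)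

lemma ball_sub_ball: "dist y y' \<le> d \<Longrightarrow> ball y \<tau> \<subseteq> ball y' (\<tau> + d)"
proof
  fix x assume "dist y y' \<le> d" "x \<in> ball y \<tau>"
  then show "x \<in> ball y' (\<tau> + d)"
    using dist_triangle[of y' x y] by (simp add: dist_commute)
qed

lemma Mx_open: "open {y. s < Mx g (y::'a::euclidean_space)}"
proof (rule openI)
  fix y assume "y \<in> {y. s < Mx g y}"
  then obtain \<tau> where tau: "0 < \<tau>" and sl: "s < IB g y \<tau> / emeasure lborel (ball y \<tau>)"
    unfolding Mx_def by (auto simp: less_SUP_iff)
  define n where "n = DIM('a)"
  define V where "V = UV TYPE('a)"
  have V: "0 < V" unfolding V_def by (rule UV_pos)
  have eb: "\<And>c s. 0 \<le> s \<Longrightarrow> emeasure lborel (ball (c::'a) s) = ennreal (s^n * V)"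
    unfolding n_def V_def by (rule emeasure_ball_UV)
  have sfin: "s \<noteq> top" using sl by auto
  show "\<exists>e>0. ball y e \<subseteq> {y. s < Mx g y}"
  proof (cases "IB g y \<tau> = top")
    case True
    show ?thesis
    proof (intro exI conjI subsetI)
      fix y' assume "y' \<in> ball y 1"
      then have "ball y \<tau> \<subseteq> ball y' (\<tau> + 1)" by (intro ball_sub_ball) simp
      then have "IB g y' (\<tau>+1) = top" using IB_mono_set[of y \<tau> y' "\<tau>+1" g] True by (simp add: top_unique)
      then have "IB g y' (\<tau>+1) / emeasure lborel (ball y' (\<tau>+1)) = top"
        using eb[of "\<tau>+1" y'] tau V by (simp add: ennreal_top_divide)
      then have "s < IB g y' (\<tau>+1) / emeasure lborel (ball y' (\<tau>+1))"
        using sfin by (simp add: top.not_eq_extremum)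
      then show "y' \<in> {y. s < Mx g y}" unfolding Mx_def using tau
        by (auto simp: less_SUP_iff intro!: bexI[of _ "\<tau>+1"])
    qed simp
  next
    case False
    define A where "A = enn2real (IB g y \<tau>)"
    have IBA: "IB g y \<tau> = ennreal A" "0 \<le> A" using False by (auto simp: A_def less_top)
    obtain S where S: "s = ennreal S" "0 \<le> S" using sfin by (cases s) auto
    have "s < ennreal (A / (\<tau>^n * V))"
      using sl IBA eb[of \<tau> y] tau V by (simp add: divide_ennreal)
    then have SA: "S < A / (\<tau>^n * V)" using S by (simp add: ennreal_less_iff)
    have tnV: "0 < \<tau>^n * V" using tau V by simp
    then have "S * (\<tau>^n * V) < A" using SA by (simp add: field_simps)
    then have Apos: "0 < A" using S tnV by (smt (verit) mult_nonneg_nonneg)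
    define q where "q = S * \<tau>^n * V / A"
    have q1: "q < 1" unfolding q_def using Apos \<open>S * (\<tau>^n * V) < A\<close> by (simp add: field_simps)
    define e where "e = \<tau> * (1 - q) / (real n + 1)"
    have e: "0 < e" unfolding e_def using q1 tau by simp
    show ?thesis
    proof (intro exI conjI subsetI e)
      fix y' assume "y' \<in> ball y e"
      define d where "d = dist y y'"
      have d: "0 \<le> d" "d < e" using \<open>y' \<in> ball y e\<close> by (auto simp: d_def)
      have "real n * d \<le> real n * e" using d by (intro mult_left_mono) auto
      also have "real n * e < (1 - q) * \<tau>"
        unfolding e_def using q1 tau by (simp add: field_simps)
      finally have "q * (\<tau> + d) ^ n < \<tau> ^ n" by (intro bern_aux tau d)
      then have "S * \<tau>^n * V * (\<tau> + d) ^ n < A * \<tau>^n"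
        using Apos unfolding q_def by (simp add: field_simps)
      then have "S * (V * (\<tau> + d) ^ n) < A" using tau by (simp add: field_simps)
      then have Sl: "S < A / ((\<tau> + d)^n * V)" using V tau d
        by (simp add: field_simps)
      have "ball y \<tau> \<subseteq> ball y' (\<tau> + d)" by (intro ball_sub_ball) (simp add: d_def)
      then have IBle: "ennreal A \<le> IB g y' (\<tau> + d)" using IB_mono_set[of y \<tau> y' "\<tau>+d" g] IBA by simp
      have "s < ennreal (A / ((\<tau> + d)^n * V))" using Sl S by (simp add: ennreal_less_iff)
      also have "\<dots> = ennreal A / emeasure lborel (ball y' (\<tau>+d))"
        using eb[of "\<tau>+d" y'] tau d V IBA by (simp add: divide_ennreal)
      also have "\<dots> \<le> IB g y' (\<tau> + d) / emeasure lborel (ball y' (\<tau>+d))"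
        by (intro divide_right_mono_ennreal IBle)
      finally show "y' \<in> {y. s < Mx g y}" unfolding Mx_def using tau d
        by (auto simp: less_SUP_iff intro!: bexI[of _ "\<tau>+d"])
    qed (fact e)
  qed
qed

lemma Mx_measurable[measurable]: "Mx g \<in> borel_measurable (borel :: 'a::euclidean_space measure)"
  by (rule borel_measurableI_greater) (simp add: Mx_open borel_open)
lemma countable_union_bound:
  assumes C: "countable C" and A: "\<And>i. i \<in> C \<Longrightarrow> A i \<in> sets M"
    and fin: "\<And>F. finite F \<Longrightarrow> F \<subseteq> C \<Longrightarrow> emeasure M (\<Union>i\<in>F. A i) \<le> b"
  shows "emeasure M (\<Union>i\<in>C. A i) \<le> b"
proof (cases "C = {}")
  case True then show ?thesis by simp
next
  case False
  define e where "e = from_nat_into C"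
  have rC: "range e = C" unfolding e_def using False C by simp
  define B where "B m = (\<Union>i\<in>e ` {..<m}. A i)" for m
  have "(\<Union>i\<in>C. A i) = (\<Union>m. B m)"
    unfolding B_def rC[symmetric] by auto
  moreover have "(SUP m. emeasure M (B m)) = emeasure M (\<Union>m. B m)"
  proof (rule SUP_emeasure_incseq)
    show "range B \<subseteq> sets M" unfolding B_def using A rC
      by (auto intro!: sets.finite_UN)
    show "incseq B" unfolding incseq_def B_def by (intro allI impI UN_mono image_mono) auto
  qed
  moreover have "emeasure M (B m) \<le> b" for m
    unfolding B_def using rC by (intro fin) auto
  ultimately show ?thesis by (metis SUP_least)
qed

lemma DIM_ge1: "1 \<le> DIM('a::euclidean_space)"
  using DIM_positive[where 'a='a] by linarith

lemma weak_type:
  fixes g :: "'a::euclidean_space \<Rightarrow> ennreal"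
  assumes g[measurable]: "g \<in> borel_measurable borel" and s: "0 < s"
  shows "emeasure lborel {y. ennreal s < Mx g y} \<le> ennreal (5^DIM('a) / s) * (\<integral>\<^sup>+ z. g z \<partial>lborel)"
proof (cases "(\<integral>\<^sup>+ z. g z \<partial>lborel) = top")
  case True
  then show ?thesis using s by (simp add: ennreal_mult_top)
next
  case False
  define T where "T = enn2real (\<integral>\<^sup>+ z. g z \<partial>lborel)"
  have T: "(\<integral>\<^sup>+ z. g z \<partial>lborel) = ennreal T" "0 \<le> T" using False by (auto simp: T_def less_top)
  define n where "n = DIM('a)"
  define V where "V = UV TYPE('a)"
  have V: "0 < V" unfolding V_def by (rule UV_pos)
  have n1: "1 \<le> n" unfolding n_def by (rule DIM_ge1)
  have eb: "\<And>c s. 0 \<le> s \<Longrightarrow> emeasure lborel (ball (c::'a) s) = ennreal (s^n * V)"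
    unfolding n_def V_def by (rule emeasure_ball_UV)
  define E where "E = {y. ennreal s < Mx g y}"
  have IBle: "IB g y \<rho> \<le> ennreal T" for y \<rho>
    unfolding IB_def T(1)[symmetric] by (intro nn_integral_mono) (auto simp: indicator_def)
  have "\<forall>y\<in>E. \<exists>\<rho>. 0 < \<rho> \<and> ennreal s < IB g y \<rho> / emeasure lborel (ball y \<rho>)"
    unfolding E_def Mx_def by (auto simp: less_SUP_iff)
  then obtain \<rho> where \<rho>: "\<And>y. y \<in> E \<Longrightarrow> 0 < \<rho> y"
      and \<rho>s: "\<And>y. y \<in> E \<Longrightarrow> ennreal s < IB g y (\<rho> y) / emeasure lborel (ball y (\<rho> y))"
    by metis
  define Ir where "Ir y = enn2real (IB g y (\<rho> y))" for y
  have IrT: "IB g y (\<rho> y) = ennreal (Ir y)" "0 \<le> Ir y" "Ir y \<le> T" for y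
  proof -
    have fin: "IB g y (\<rho> y) \<noteq> top" using IBle[of y "\<rho> y"] by (auto simp: top_unique)
    show e1: "IB g y (\<rho> y) = ennreal (Ir y)" using fin by (simp add: Ir_def ennreal_enn2real_if)
    show "0 \<le> Ir y" by (simp add: Ir_def)
    show "Ir y \<le> T" using IBle[of y "\<rho> y"] T(2) unfolding e1 by (simp add: ennreal_le_iff)
  qed
  have key: "s * (\<rho> y ^ n * V) < Ir y" if y: "y \<in> E" for y
  proof -
    have pos: "0 < \<rho> y ^ n * V" using \<rho>[OF y] V by simp
    have "ennreal s < ennreal (Ir y / (\<rho> y ^ n * V))"
      using \<rho>s[OF y] eb[of "\<rho> y" y] \<rho>[OF y] IrT[of y] pos by (simp add: divide_ennreal)
    then have "s < Ir y / (\<rho> y ^ n * V)" using s by (simp add: ennreal_less_iff)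
    then show ?thesis using pos by (simp add: field_simps)
  qed
  define B where "B = 1 + T / (s * V)"
  have \<rho>B: "0 < \<rho> y \<and> \<rho> y \<le> B" if y: "y \<in> E" for y
  proof -
    have "\<rho> y \<le> B"
    proof (cases "\<rho> y \<le> 1")
      case True then show ?thesis unfolding B_def using T s V by (simp add: add_increasing2)
    next
      case False
      then have "\<rho> y \<le> \<rho> y ^ n" using n1
        by (metis less_eq_real_def not_le power_increasing power_one_right)
      then have "s * (\<rho> y * V) \<le> s * (\<rho> y ^ n * V)" using s V by simp
      also have "\<dots> < T" using key[OF y] IrT[of y] by simp
      finally have "\<rho> y < T / (s * V)" using s V by (simp add: field_simps)
      then show ?thesis unfolding B_def by simp
    qed
    then show ?thesis using \<rho>[OF y] by simp
  qed
  have cover: "E \<subseteq> (\<Union>i\<in>E. ball ((\<lambda>y. y) i) (\<rho> i))" using \<rho> by auto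
  obtain C where C: "countable C" "C \<subseteq> E"
     and disj: "pairwise (\<lambda>i j. disjnt (ball ((\<lambda>y. y) i) (\<rho> i)) (ball ((\<lambda>y. y) j) (\<rho> j))) C"
     and cov: "E \<subseteq> (\<Union>i\<in>C. ball ((\<lambda>y. y) i) (5 * \<rho> i))"
    by (rule Vitali_covering_lemma_balls[OF cover \<rho>B]) auto
  have "emeasure lborel E \<le> emeasure lborel (\<Union>i\<in>C. ball i (5 * \<rho> i))"
    using cov by (intro emeasure_mono) (auto intro!: borel_open)
  also have "\<dots> \<le> ennreal (5^n / s * T)"
  proof (rule countable_union_bound[OF C(1)])
    fix F assume F: "finite F" "F \<subseteq> C"
    have dF: "disjoint_family_on (\<lambda>i. ball i (\<rho> i)) F"
      using disj F unfolding disjoint_family_on_def pairwise_def disjnt_def by blast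
    have sumI: "(\<Sum>i\<in>F. ennreal (Ir i)) \<le> ennreal T"
    proof -
      have "(\<Sum>i\<in>F. ennreal (Ir i)) = (\<Sum>i\<in>F. IB g i (\<rho> i))" using IrT by simp
      also have "\<dots> = (\<integral>\<^sup>+ z. (\<Sum>i\<in>F. g z * indicator (ball i (\<rho> i)) z) \<partial>lborel)"
        unfolding IB_def by (rule nn_integral_sum[symmetric]) measurable
      also have "\<dots> \<le> (\<integral>\<^sup>+ z. g z \<partial>lborel)"
      proof (intro nn_integral_mono)
        fix z
        have "(\<Sum>i\<in>F. g z * indicator (ball i (\<rho> i)) z) = g z * (\<Sum>i\<in>F. indicator (ball i (\<rho> i)) z)"
          by (simp add: sum_distrib_left)
        also have "(\<Sum>i\<in>F. indicator (ball i (\<rho> i)) z :: ennreal) \<le> 1"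
        proof (cases "\<exists>j\<in>F. z \<in> ball j (\<rho> j)")
          case True
          then obtain j where "j \<in> F" "z \<in> ball j (\<rho> j)" by blast
          then have "(\<Sum>i\<in>F. 1 * indicator (ball i (\<rho> i)) z :: ennreal) = 1"
            by (intro sum_indicator_disjoint_family[OF dF _ F(1)])
          then show ?thesis by simp
        next
          case False then show ?thesis by (simp add: indicator_def)
        qed
        then have "g z * (\<Sum>i\<in>F. indicator (ball i (\<rho> i)) z) \<le> g z * 1" by (rule mult_left_mono) simp
        finally show "(\<Sum>i\<in>F. g z * indicator (ball i (\<rho> i)) z) \<le> g z" by simp
      qed
      finally show ?thesis using T by simp
    qed
    have "emeasure lborel (\<Union>i\<in>F. ball i (5 * \<rho> i)) \<le> (\<Sum>i\<in>F. emeasure lborel (ball i (5 * \<rho> i)))"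
      using F by (intro emeasure_subadditive_finite) auto
    also have "\<dots> = (\<Sum>i\<in>F. ennreal (5^n * (\<rho> i ^ n * V)))"
    proof (intro sum.cong refl)
      fix i assume "i \<in> F"
      then have "0 \<le> 5 * \<rho> i" using F C \<rho>[of i] by auto
      then show "emeasure lborel (ball i (5 * \<rho> i)) = ennreal (5^n * (\<rho> i ^ n * V))"
        by (simp add: eb power_mult_distrib mult.assoc)
    qed
    also have "\<dots> \<le> (\<Sum>i\<in>F. ennreal (5^n / s * Ir i))"
    proof (intro sum_mono ennreal_leI)
      fix i assume "i \<in> F"
      then have "s * (\<rho> i ^ n * V) < Ir i" using key F C by blast
      then have "\<rho> i ^ n * V \<le> Ir i / s" using s by (simp add: field_simps)
      then have "5^n * (\<rho> i ^ n * V) \<le> 5^n * (Ir i / s)" by (intro mult_left_mono) auto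
      then show "5^n * (\<rho> i ^ n * V) \<le> 5^n / s * Ir i" by simp
    qed
    also have "\<dots> = ennreal (\<Sum>i\<in>F. 5^n / s * Ir i)"
      using s IrT by (intro sum_ennreal) auto
    also have "\<dots> = ennreal (5^n / s) * ennreal (\<Sum>i\<in>F. Ir i)"
    proof -
      have "(\<Sum>i\<in>F. 5^n / s * Ir i) = 5^n / s * (\<Sum>i\<in>F. Ir i)" by (rule sum_distrib_left[symmetric])
      moreover have "0 \<le> (\<Sum>i\<in>F. Ir i)" using IrT by (simp add: sum_nonneg)
      moreover have "0 \<le> 5^n / s" using s by simp
      ultimately show ?thesis by (metis ennreal_mult)
    qed
    also have "\<dots> \<le> ennreal (5^n / s) * ennreal T"
    proof (rule mult_left_mono)
      have "ennreal (\<Sum>i\<in>F. Ir i) = (\<Sum>i\<in>F. ennreal (Ir i))"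
        using IrT by (intro sum_ennreal[symmetric]) auto
      then show "ennreal (\<Sum>i\<in>F. Ir i) \<le> ennreal T" using sumI by simp
    qed simp
    also have "\<dots> = ennreal (5^n / s * T)" using s T by (subst ennreal_mult) auto
    finally show "emeasure lborel (\<Union>i\<in>F. ball i (5 * \<rho> i)) \<le> ennreal (5^n / s * T)" .
  qed auto
  also have "\<dots> = ennreal (5^DIM('a) / s) * (\<integral>\<^sup>+ z. g z \<partial>lborel)"
    using s T by (subst ennreal_mult) (auto simp: n_def)
  finally show ?thesis unfolding E_def .
qed

lemma pow_integral_fin:
  fixes p A :: real
  assumes p: "0 < p" and A: "0 \<le> A"
  shows "(\<integral>\<^sup>+ u. ennreal (u powr (p-1)) * indicator {0<..<A} u \<partial>lborel) = ennreal (A powr p / p)"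
proof -
  have hi: "((\<lambda>x. x powr (p-1)) has_integral (A powr (p-1+1) / (p-1+1))) {0..A}"
    using p A by (intro has_integral_powr_from_0) auto
  have "(\<integral>\<^sup>+ u. ennreal (indicator {0..A} u * u powr (p-1)) \<partial>lborel) = ennreal (A powr (p-1+1) / (p-1+1))"
    by (rule nn_integral_has_integral_lebesgue[OF _ hi]) simp
  moreover have "(\<integral>\<^sup>+ u. ennreal (u powr (p-1)) * indicator {0<..<A} u \<partial>lborel)
     = (\<integral>\<^sup>+ u. ennreal (indicator {0..A} u * u powr (p-1)) \<partial>lborel)"
  proof (rule nn_integral_cong_AE)
    show "AE u in lborel. ennreal (u powr (p-1)) * indicator {0<..<A} u = ennreal (indicator {0..A} u * u powr (p-1))"
      using AE_lborel_singleton[of A]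
      by eventually_elim (auto simp: indicator_def)
  qed
  ultimately show ?thesis by simp
qed

lemma pow_integral:
  fixes p :: real and a :: ennreal
  assumes p: "0 < p"
  shows "(\<integral>\<^sup>+ u. ennreal (u powr (p-1)) * indicator {u. 0 < u \<and> ennreal u < a} u \<partial>lborel) = enn_powr a p * ennreal (1/p)"
proof (cases "a = top")
  case False
  then obtain A where a: "a = ennreal A" "0 \<le> A" by (cases a) auto
  have "{u. 0 < u \<and> ennreal u < a} = {0<..<A}" using a by (auto simp: ennreal_less_iff)
  then show ?thesis using pow_integral_fin[OF p a(2)] a p
    by (simp add: enn_powr_def ennreal_mult[symmetric])
next
  case True
  define I where "I = (\<integral>\<^sup>+ u. ennreal (u powr (p-1)) * indicator {u. 0 < u \<and> ennreal u < a} u \<partial>lborel)"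
  have lb: "ennreal (real k / p) \<le> I" for k :: nat
  proof -
    define A where "A = real k powr (1/p)"
    have A: "0 \<le> A" unfolding A_def by simp
    have "ennreal (real k / p) = ennreal (A powr p / p)"
      unfolding A_def using p by (simp add: powr_powr)
    also have "\<dots> = (\<integral>\<^sup>+ u. ennreal (u powr (p-1)) * indicator {0<..<A} u \<partial>lborel)"
      by (rule pow_integral_fin[OF p A, symmetric])
    also have "\<dots> \<le> I" unfolding I_def using True
      by (intro nn_integral_mono mult_left_mono) (auto simp: indicator_def)
    finally show ?thesis .
  qed
  have "I = top"
  proof (rule ccontr)
    assume "I \<noteq> top"
    then obtain J where J: "I = ennreal J" "0 \<le> J" by (cases I) auto
    obtain k :: nat where "J * p < real k" using reals_Archimedean2 by blast
    then have "J < real k / p" using p by (simp add: field_simps)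
    moreover have "real k / p \<le> J" using lb[of k] J p by (simp add: ennreal_le_iff)
    ultimately show False by simp
  qed
  then show ?thesis unfolding I_def using True p by (simp add: enn_powr_def ennreal_top_mult)
qed

lemma enn_powr_measurable[measurable]:
  "f \<in> borel_measurable M \<Longrightarrow> (\<lambda>x. enn_powr (f x) p) \<in> borel_measurable M"
proof -
  assume f[measurable]: "f \<in> borel_measurable M"
  have "f -` {top} \<inter> space M \<in> sets M" by (rule measurable_sets[OF f]) simp
  moreover have "f -` {top} \<inter> space M = {x\<in>space M. f x = top}" by auto
  ultimately have s: "{x\<in>space M. f x = top} \<in> sets M" by simp
  show ?thesis unfolding enn_powr_def infinity_ennreal_def
    by (rule measurable_If[OF _ _ s]) measurable
qed

lemma layer_cake:
  fixes F :: "'a::euclidean_space \<Rightarrow> ennreal"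
  assumes F[measurable]: "F \<in> borel_measurable borel" and p: "0 < p"
  shows "(\<integral>\<^sup>+ y. enn_powr (F y) p \<partial>lborel) = ennreal p *
     (\<integral>\<^sup>+ u. ennreal (u powr (p-1)) * indicator {0<..} u * emeasure lborel {y. ennreal u < F y} \<partial>lborel)"
proof -
  have "(\<integral>\<^sup>+ u. ennreal (u powr (p-1)) * indicator {0<..} u * emeasure lborel {y. ennreal u < F y} \<partial>lborel)
      = (\<integral>\<^sup>+ u. \<integral>\<^sup>+ y. ennreal (u powr (p-1)) * indicator {u. 0 < u \<and> ennreal u < F y} u \<partial>lborel \<partial>lborel)"
  proof (rule nn_integral_cong)
    fix u :: real
    have "emeasure lborel {y. ennreal u < F y} = (\<integral>\<^sup>+ y. indicator {y. ennreal u < F y} y \<partial>lborel)"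
      by (rule nn_integral_indicator[symmetric]) measurable
    then have "ennreal (u powr (p-1)) * indicator {0<..} u * emeasure lborel {y. ennreal u < F y}
        = (\<integral>\<^sup>+ y. ennreal (u powr (p-1)) * indicator {0<..} u * indicator {y. ennreal u < F y} y \<partial>lborel)"
      by (simp add: nn_integral_cmult)
    also have "\<dots> = (\<integral>\<^sup>+ y. ennreal (u powr (p-1)) * indicator {u. 0 < u \<and> ennreal u < F y} u \<partial>lborel)"
      by (intro nn_integral_cong) (simp add: indicator_def)
    finally show "ennreal (u powr (p-1)) * indicator {0<..} u * emeasure lborel {y. ennreal u < F y}
        = (\<integral>\<^sup>+ y. ennreal (u powr (p-1)) * indicator {u. 0 < u \<and> ennreal u < F y} u \<partial>lborel)" .
  qed
  also have "\<dots> = (\<integral>\<^sup>+ y. \<integral>\<^sup>+ u. ennreal (u powr (p-1)) * indicator {u. 0 < u \<and> ennreal u < F y} u \<partial>lborel \<partial>lborel)"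
    by (rule lborel_pair.Fubini'[symmetric]) (simp add: case_prod_beta indicator_def; measurable)
  also have "\<dots> = (\<integral>\<^sup>+ y. enn_powr (F y) p * ennreal (1/p) \<partial>lborel)"
    using pow_integral[OF p] by simp
  also have "\<dots> = (\<integral>\<^sup>+ y. enn_powr (F y) p \<partial>lborel) * ennreal (1/p)"
    by (rule nn_integral_multc) measurable
  finally have eq: "(\<integral>\<^sup>+ u. ennreal (u powr (p-1)) * indicator {0<..} u * emeasure lborel {y. ennreal u < F y} \<partial>lborel)
     = (\<integral>\<^sup>+ y. enn_powr (F y) p \<partial>lborel) * ennreal (1/p)" .
  have "ennreal p * ennreal (1/p) = 1" using p by (simp add: ennreal_mult[symmetric])
  then show ?thesis unfolding eq by (metis mult.commute mult.left_commute mult_1_right)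
qed

lemma trunc_pt:
  fixes h :: ennreal
  shows "h \<le> h * indicator {z. ennreal u < 2 * hh z} z + ennreal (u/2) \<or> hh z \<noteq> h"
proof (cases "hh z = h")
  case True
  show ?thesis
  proof (cases "ennreal u < 2 * h")
    case True then show ?thesis using \<open>hh z = h\<close> by (simp add: indicator_def)
  next
    case False
    then have le: "2 * h \<le> ennreal u" by simp
    have "h \<le> ennreal (u/2)"
    proof (cases h)
      case (real H)
      then have "ennreal (2 * H) \<le> ennreal u" using le by (simp add: ennreal_mult)
      then have "2 * H \<le> u \<or> 2 * H \<le> 0" by (auto simp: ennreal_le_iff2)
      then show ?thesis using real by (cases "H = 0") (auto intro: ennreal_leI)
    next
      case top then show ?thesis using le by (simp add: ennreal_mult_top top_unique)
    qed
    then show ?thesis by (simp add: add_increasing)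
  qed
qed simp

lemma Mx_trunc:
  fixes h :: "'a::euclidean_space \<Rightarrow> ennreal"
  assumes h[measurable]: "h \<in> borel_measurable borel" and u: "0 < u"
  shows "Mx h y \<le> Mx (\<lambda>z. h z * indicator {z. ennreal u < 2 * h z} z) y + ennreal (u/2)"
proof -
  define k where "k = (\<lambda>z. h z * indicator {z. ennreal u < 2 * h z} z)"
  have k[measurable]: "k \<in> borel_measurable borel" unfolding k_def by measurable
  have "IB h y \<tau> / emeasure lborel (ball y \<tau>) \<le> Mx k y + ennreal (u/2)" if t: "0 < \<tau>" for \<tau>
  proof -
    define m where "m = emeasure lborel (ball y \<tau>)"
    have "0 < \<tau>^DIM('a) * UV TYPE('a)" using t UV_pos[where 'a='a] by simp
    then have m: "m \<noteq> 0" "m \<noteq> top" unfolding m_def using t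
      by (auto simp: emeasure_ball_UV)
    have "IB h y \<tau> \<le> (\<integral>\<^sup>+ z. (k z + ennreal (u/2)) * indicator (ball y \<tau>) z \<partial>lborel)"
      unfolding IB_def
    proof (intro nn_integral_mono mult_right_mono)
      fix z show "h z \<le> k z + ennreal (u/2)" using trunc_pt[of "h z" u h z] unfolding k_def by simp
    qed simp
    also have "\<dots> = (\<integral>\<^sup>+ z. k z * indicator (ball y \<tau>) z + ennreal (u/2) * indicator (ball y \<tau>) z \<partial>lborel)"
      by (simp add: distrib_right)
    also have "\<dots> = IB k y \<tau> + ennreal (u/2) * m"
      unfolding IB_def m_def by (subst nn_integral_add) (auto simp: nn_integral_cmult_indicator)
    finally have "IB h y \<tau> / m \<le> (IB k y \<tau> + ennreal (u/2) * m) / m"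
      by (rule divide_right_mono_ennreal)
    also have "\<dots> = IB k y \<tau> / m + ennreal (u/2)"
      using m by (simp add: add_divide_distrib_ennreal ennreal_mult_divide_eq)
    also have "IB k y \<tau> / m \<le> Mx k y"
      unfolding Mx_def m_def using t by (intro SUP_upper) auto
    finally show ?thesis unfolding m_def by (simp add: add_right_mono)
  qed
  then show ?thesis unfolding Mx_def[of h] k_def[symmetric] by (intro SUP_least) auto
qed

lemma Mx_level:
  fixes h :: "'a::euclidean_space \<Rightarrow> ennreal"
  assumes h[measurable]: "h \<in> borel_measurable borel" and u: "0 < u"
  shows "emeasure lborel {y. ennreal u < Mx h y} \<le>
    ennreal (5^DIM('a) / (u/2)) * (\<integral>\<^sup>+ z. h z * indicator {z. ennreal u < 2 * h z} z \<partial>lborel)"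
proof -
  define k where "k = (\<lambda>z. h z * indicator {z. ennreal u < 2 * h z} z)"
  have k[measurable]: "k \<in> borel_measurable borel" unfolding k_def by measurable
  have "{y. ennreal u < Mx h y} \<subseteq> {y. ennreal (u/2) < Mx k y}"
  proof safe
    fix y assume a: "ennreal u < Mx h y"
    show "ennreal (u/2) < Mx k y"
    proof (rule ccontr)
      assume "\<not> ennreal (u/2) < Mx k y"
      then have "Mx k y \<le> ennreal (u/2)" by simp
      then have "Mx h y \<le> ennreal (u/2) + ennreal (u/2)"
        using Mx_trunc[OF h u, of y] unfolding k_def[symmetric] by (meson add_right_mono order.trans)
      also have "\<dots> = ennreal u" using u by (simp flip: ennreal_plus)
      finally show False using a by simp
    qed
  qed
  then have "emeasure lborel {y. ennreal u < Mx h y} \<le> emeasure lborel {y. ennreal (u/2) < Mx k y}"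
    by (intro emeasure_mono) measurable
  also have "\<dots> \<le> ennreal (5^DIM('a) / (u/2)) * (\<integral>\<^sup>+ z. k z \<partial>lborel)"
    using u by (intro weak_type k) auto
  finally show ?thesis unfolding k_def .
qed

lemma enn_powr_ennreal: "0 \<le> X \<Longrightarrow> enn_powr (ennreal X) p = ennreal (X powr p)"
  by (simp add: enn_powr_def)

lemma pow_identity:
  assumes r: "1 < r"
  shows "h * enn_powr (2 * h) (r-1) = ennreal (2 powr (r-1)) * enn_powr h r"
proof (cases h)
  case (real H)
  have "H * (2 * H) powr (r-1) = 2 powr (r-1) * H powr r"
  proof (cases "H = 0")
    case True then show ?thesis using r by simp
  next
    case False
    then have Hp: "0 < H" using real by simp
    have "H * (2 * H) powr (r-1) = 2 powr (r-1) * (H powr 1 * H powr (r-1))"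
      using Hp by (simp add: powr_mult)
    also have "H powr 1 * H powr (r-1) = H powr r" by (subst powr_add[symmetric]) simp
    finally show ?thesis .
  qed
  have H: "0 \<le> H" using real by simp
  have "h * enn_powr (2 * h) (r-1) = ennreal H * enn_powr (ennreal (2 * H)) (r-1)"
    using real H by (simp add: ennreal_mult)
  also have "\<dots> = ennreal H * ennreal ((2 * H) powr (r-1))"
    using H by (simp add: enn_powr_ennreal)
  also have "\<dots> = ennreal (H * (2 * H) powr (r-1))" using H by (simp add: ennreal_mult)
  also have "\<dots> = ennreal (2 powr (r-1) * H powr r)" using \<open>H * (2 * H) powr (r-1) = 2 powr (r-1) * H powr r\<close> by simp
  also have "\<dots> = ennreal (2 powr (r-1)) * enn_powr h r"
    using real H by (simp add: enn_powr_ennreal ennreal_mult)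
  finally show ?thesis .
next
  case top
  then show ?thesis using r by (simp add: enn_powr_def ennreal_mult_top)
qed

lemma HL_strong:
  fixes h :: "'a::euclidean_space \<Rightarrow> ennreal"
  assumes h[measurable]: "h \<in> borel_measurable borel" and r: "1 < r"
  shows "(\<integral>\<^sup>+ y. enn_powr (Mx h y) r \<partial>lborel) \<le>
    ennreal (r * (2 * 5^DIM('a) / (r-1) * 2 powr (r-1))) * (\<integral>\<^sup>+ y. enn_powr (h y) r \<partial>lborel)"
proof -
  define c :: real where "c = 2 * 5^DIM('a)"
  have c: "0 < c" unfolding c_def by simp
  define G where "G u z = ennreal c * (ennreal (u powr (r-1-1)) * indicator {u. 0 < u \<and> ennreal u < 2 * h z} u) * h z"
    for u :: real and z :: 'a
  have G[measurable]: "(\<lambda>(u, z). G u z) \<in> borel_measurable (lborel \<Otimes>\<^sub>M lborel)"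
    unfolding G_def by (simp add: case_prod_beta indicator_def; measurable)
  have pt: "ennreal (u powr (r-1)) * indicator {0<..} u * emeasure lborel {y. ennreal u < Mx h y}
      \<le> (\<integral>\<^sup>+ z. G u z \<partial>lborel)" for u :: real
  proof (cases "0 < u")
    case False then show ?thesis by simp
  next
    case u: True
    have "ennreal (u powr (r-1)) * indicator {0<..} u * emeasure lborel {y. ennreal u < Mx h y}
       \<le> ennreal (u powr (r-1)) * (ennreal (5^DIM('a) / (u/2)) * (\<integral>\<^sup>+ z. h z * indicator {z. ennreal u < 2 * h z} z \<partial>lborel))"
      using u Mx_level[OF h u] by (simp add: mult_left_mono)
    also have "\<dots> = ennreal (u powr (r-1) * (5^DIM('a) / (u/2))) * (\<integral>\<^sup>+ z. h z * indicator {z. ennreal u < 2 * h z} z \<partial>lborel)"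
    proof -
      have e: "ennreal (u powr (r-1) * (5^DIM('a) / (u/2))) = ennreal (u powr (r-1)) * ennreal (5^DIM('a) / (u/2))"
        using u by (intro ennreal_mult) auto
      show ?thesis by (simp only: e mult.assoc)
    qed
    also have "u powr (r-1) * (5^DIM('a) / (u/2)) = c * u powr (r-1-1)"
    proof -
      have "u powr (r-1) = u powr (r-1-1) * u powr 1" by (subst powr_add[symmetric]) simp
      then show ?thesis using u unfolding c_def by (simp add: field_simps)
    qed
    also have "ennreal (c * u powr (r-1-1)) * (\<integral>\<^sup>+ z. h z * indicator {z. ennreal u < 2 * h z} z \<partial>lborel)
       = (\<integral>\<^sup>+ z. ennreal (c * u powr (r-1-1)) * (h z * indicator {z. ennreal u < 2 * h z} z) \<partial>lborel)"
      by (rule nn_integral_cmult[symmetric]) measurable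
    also have "\<dots> = (\<integral>\<^sup>+ z. G u z \<partial>lborel)"
      unfolding G_def using u c by (intro nn_integral_cong) (simp add: indicator_def ennreal_mult)
    finally show ?thesis .
  qed
  have "(\<integral>\<^sup>+ y. enn_powr (Mx h y) r \<partial>lborel) = ennreal r *
     (\<integral>\<^sup>+ u. ennreal (u powr (r-1)) * indicator {0<..} u * emeasure lborel {y. ennreal u < Mx h y} \<partial>lborel)"
    using r by (intro layer_cake) auto
  also have "\<dots> \<le> ennreal r * (\<integral>\<^sup>+ u. \<integral>\<^sup>+ z. G u z \<partial>lborel \<partial>lborel)"
    by (intro mult_left_mono nn_integral_mono pt) simp
  also have "(\<integral>\<^sup>+ u. \<integral>\<^sup>+ z. G u z \<partial>lborel \<partial>lborel) = (\<integral>\<^sup>+ z. \<integral>\<^sup>+ u. G u z \<partial>lborel \<partial>lborel)"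
    by (rule lborel_pair.Fubini'[symmetric]) (rule G)
  also have "\<dots> = (\<integral>\<^sup>+ z. ennreal c * h z * (enn_powr (2 * h z) (r-1) * ennreal (1/(r-1))) \<partial>lborel)"
  proof (rule nn_integral_cong)
    fix z
    have "(\<integral>\<^sup>+ u. G u z \<partial>lborel) = (\<integral>\<^sup>+ u. (ennreal c * h z) * (ennreal (u powr (r-1-1)) * indicator {u. 0 < u \<and> ennreal u < 2 * h z} u) \<partial>lborel)"
      unfolding G_def by (intro nn_integral_cong) (simp add: ac_simps)
    also have "\<dots> = (ennreal c * h z) * (\<integral>\<^sup>+ u. ennreal (u powr (r-1-1)) * indicator {u. 0 < u \<and> ennreal u < 2 * h z} u \<partial>lborel)"
      by (rule nn_integral_cmult) measurable
    also have "\<dots> = ennreal c * h z * (enn_powr (2 * h z) (r-1) * ennreal (1/(r-1)))"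
      using pow_integral[of "r-1" "2 * h z"] r by simp
    finally show "(\<integral>\<^sup>+ u. G u z \<partial>lborel) = ennreal c * h z * (enn_powr (2 * h z) (r-1) * ennreal (1/(r-1)))" .
  qed
  also have "\<dots> = (\<integral>\<^sup>+ z. ennreal (c / (r-1) * 2 powr (r-1)) * enn_powr (h z) r \<partial>lborel)"
  proof (rule nn_integral_cong)
    fix z
    have "ennreal c * h z * (enn_powr (2 * h z) (r-1) * ennreal (1/(r-1)))
        = ennreal c * ennreal (1/(r-1)) * (h z * enn_powr (2 * h z) (r-1))" by (simp add: ac_simps)
    also have "\<dots> = ennreal c * ennreal (1/(r-1)) * ennreal (2 powr (r-1)) * enn_powr (h z) r"
      using pow_identity[OF r, of "h z"] by (simp add: ac_simps)
    also have "ennreal c * ennreal (1/(r-1)) * ennreal (2 powr (r-1)) = ennreal (c / (r-1) * 2 powr (r-1))"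
      using c r by (simp add: ennreal_mult[symmetric])
    finally show "ennreal c * h z * (enn_powr (2 * h z) (r-1) * ennreal (1/(r-1))) = ennreal (c / (r-1) * 2 powr (r-1)) * enn_powr (h z) r" .
  qed
  also have "\<dots> = ennreal (c / (r-1) * 2 powr (r-1)) * (\<integral>\<^sup>+ z. enn_powr (h z) r \<partial>lborel)"
    by (rule nn_integral_cmult) measurable
  finally have "(\<integral>\<^sup>+ y. enn_powr (Mx h y) r \<partial>lborel) \<le>
     ennreal r * (ennreal (c / (r-1) * 2 powr (r-1)) * (\<integral>\<^sup>+ z. enn_powr (h z) r \<partial>lborel))"
    by simp
  also have "\<dots> = ennreal (r * (2 * 5^DIM('a) / (r-1) * 2 powr (r-1))) * (\<integral>\<^sup>+ y. enn_powr (h y) r \<partial>lborel)"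
  proof -
    have e: "ennreal (r * (c / (r-1) * 2 powr (r-1))) = ennreal r * ennreal (c / (r-1) * 2 powr (r-1))"
      using r c by (intro ennreal_mult) auto
    show ?thesis unfolding c_def[symmetric] by (simp only: e mult.assoc)
  qed
  finally show ?thesis .
qed

lemma divide_ennreal_pos: "0 < p \<Longrightarrow> X / ennreal p = X * ennreal (1/p)"
  by (simp add: divide_ennreal_def inverse_ennreal divide_inverse)

lemma tonelli_avg:
  fixes H :: "'a::euclidean_space \<Rightarrow> ennreal"
  assumes H[measurable]: "H \<in> borel_measurable borel" and t: "0 < t" and tau: "0 < \<tau>"
  shows "IB H y \<tau> * emeasure lborel (ball (0::'a) t) \<le> (\<integral>\<^sup>+ w. IB H w t * indicator (ball y (\<tau>+t)) w \<partial>lborel)"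
proof -
  define F where "F w z = H z * indicator (ball w t) z * indicator (ball y (\<tau>+t)) w" for w z :: 'a
  have F[measurable]: "(\<lambda>(w, z). F w z) \<in> borel_measurable (lborel \<Otimes>\<^sub>M lborel)"
    unfolding F_def by (simp add: case_prod_beta indicator_def mem_ball; measurable)
  have "(\<integral>\<^sup>+ w. IB H w t * indicator (ball y (\<tau>+t)) w \<partial>lborel) = (\<integral>\<^sup>+ w. \<integral>\<^sup>+ z. F w z \<partial>lborel \<partial>lborel)"
    unfolding IB_def F_def by (intro nn_integral_cong nn_integral_multc[symmetric]) measurable
  also have "\<dots> = (\<integral>\<^sup>+ z. \<integral>\<^sup>+ w. F w z \<partial>lborel \<partial>lborel)"
    by (rule lborel_pair.Fubini'[symmetric]) (rule F)
  also have "\<dots> \<ge> (\<integral>\<^sup>+ z. H z * indicator (ball y \<tau>) z * emeasure lborel (ball (0::'a) t) \<partial>lborel)"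
  proof (intro nn_integral_mono)
    fix z
    show "H z * indicator (ball y \<tau>) z * emeasure lborel (ball (0::'a) t) \<le> (\<integral>\<^sup>+ w. F w z \<partial>lborel)"
    proof (cases "z \<in> ball y \<tau>")
      case False then show ?thesis by simp
    next
      case True
      have sub: "ball z t \<subseteq> ball y (\<tau>+t)"
      proof
        fix w assume "w \<in> ball z t"
        then show "w \<in> ball y (\<tau>+t)" using True dist_triangle[of y w z] by (simp add: dist_commute)
      qed
      have "(\<integral>\<^sup>+ w. F w z \<partial>lborel) = (\<integral>\<^sup>+ w. H z * indicator (ball z t) w \<partial>lborel)"
      proof (intro nn_integral_cong)
        fix w :: 'a
        have iff: "z \<in> ball w t \<longleftrightarrow> w \<in> ball z t" by (simp add: dist_commute)
        show "F w z = H z * indicator (ball z t) w"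
        proof (cases "w \<in> ball z t")
          case True
          then have "w \<in> ball y (\<tau>+t)" using sub by blast
          then show ?thesis unfolding F_def using True iff by (simp add: indicator_def del: mem_ball)
        next
          case False
          then show ?thesis unfolding F_def using iff by (simp add: indicator_def del: mem_ball)
        qed
      qed
      also have "\<dots> = H z * emeasure lborel (ball z t)" by (simp add: nn_integral_cmult_indicator)
      also have "emeasure lborel (ball z t) = emeasure lborel (ball (0::'a) t)"
        using t by (simp add: emeasure_ball_UV)
      finally show ?thesis using True by simp
    qed
  qed
  also have "(\<integral>\<^sup>+ z. H z * indicator (ball y \<tau>) z * emeasure lborel (ball (0::'a) t) \<partial>lborel)
     = IB H y \<tau> * emeasure lborel (ball (0::'a) t)"
    unfolding IB_def by (rule nn_integral_multc) measurable
  finally show ?thesis .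
qed

lemma IB_measurable[measurable]:
  fixes H :: "'a::euclidean_space \<Rightarrow> ennreal"
  assumes H[measurable]: "H \<in> borel_measurable borel"
  shows "(\<lambda>w. IB H w t) \<in> borel_measurable lborel"
proof -
  have m: "(\<lambda>(w, z). H z * indicator (ball w t) z) \<in> borel_measurable (lborel \<Otimes>\<^sub>M (lborel::'a measure))"
    by (simp add: case_prod_beta indicator_def mem_ball; measurable)
  show ?thesis unfolding IB_def
    using lborel.borel_measurable_nn_integral_fst[OF m] by simp
qed

lemma pointwise_split:
  fixes H :: "'a::euclidean_space \<Rightarrow> ennreal"
  assumes H[measurable]: "H \<in> borel_measurable borel" and t: "0 < t" and y: "y \<in> ball x t"
  shows "Mx H y \<le> Mx (\<lambda>z. H z * indicator (ball x (2*t)) z) y + ennreal (2^DIM('a)) *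
     (SUP p\<in>{(c, s). s > 0 \<and> x \<in> ball c s}. IB (\<lambda>w. IB H w t / emeasure lborel (ball w t)) (fst p) (snd p) / emeasure lborel (ball (fst p) (snd p)))"
    (is "_ \<le> Mx ?H1 y + _ * ?U")
proof -
  define g where "g = (\<lambda>w. IB H w t / emeasure lborel (ball w t))"
  define n where "n = DIM('a)"
  define V where "V = UV TYPE('a)"
  have V: "0 < V" unfolding V_def by (rule UV_pos)
  have eb: "\<And>c s. 0 \<le> s \<Longrightarrow> emeasure lborel (ball (c::'a) s) = ennreal (s^n * V)"
    unfolding n_def V_def by (rule emeasure_ball_UV)
  have "IB H y \<tau> / emeasure lborel (ball y \<tau>) \<le> Mx ?H1 y + ennreal (2^n) * ?U" if tau: "0 < \<tau>" for \<tau>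
  proof (cases "\<tau> \<le> t")
    case True
    have sub: "ball y \<tau> \<subseteq> ball x (2*t)"
    proof
      fix z assume "z \<in> ball y \<tau>"
      then show "z \<in> ball x (2*t)" using y True dist_triangle[of x z y] by simp
    qed
    have "IB H y \<tau> = IB ?H1 y \<tau>" unfolding IB_def
      using sub by (intro nn_integral_cong) (auto simp: indicator_def)
    then have "IB H y \<tau> / emeasure lborel (ball y \<tau>) \<le> Mx ?H1 y"
      unfolding Mx_def using tau by (auto intro!: SUP_upper2[of \<tau>])
    then show ?thesis by (simp add: add_increasing2)
  next
    case False
    then have tt: "t < \<tau>" by simp
    have pt: "0 < t^n * V" using t V by simp
    have ptt: "0 < (\<tau>+t)^n * V" using t tau V by simp
    have ptau: "0 < \<tau>^n * V" using tau V by simp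
    have "IB H y \<tau> * emeasure lborel (ball (0::'a) t) \<le> (\<integral>\<^sup>+ w. IB H w t * indicator (ball y (\<tau>+t)) w \<partial>lborel)"
      by (rule tonelli_avg[OF H t tau])
    then have "IB H y \<tau> * ennreal (t^n * V) * ennreal (1 / (t^n * V))
        \<le> (\<integral>\<^sup>+ w. IB H w t * indicator (ball y (\<tau>+t)) w \<partial>lborel) * ennreal (1 / (t^n * V))"
      using t by (simp add: eb mult_right_mono)
    also have "\<dots> = (\<integral>\<^sup>+ w. IB H w t * indicator (ball y (\<tau>+t)) w * ennreal (1 / (t^n * V)) \<partial>lborel)"
      by (rule nn_integral_multc[symmetric]) measurable
    also have "\<dots> = IB g y (\<tau>+t)"
      unfolding IB_def g_def using t by (intro nn_integral_cong) (simp add: eb divide_ennreal_pos[OF pt]; simp add: ac_simps)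
    also have "IB H y \<tau> * ennreal (t^n * V) * ennreal (1 / (t^n * V)) = IB H y \<tau>"
      using pt t V by (simp add: mult.assoc ennreal_mult[symmetric])
    finally have IBg: "IB H y \<tau> \<le> IB g y (\<tau>+t)" .
    have "IB H y \<tau> / emeasure lborel (ball y \<tau>) = IB H y \<tau> * ennreal (1 / (\<tau>^n * V))"
      using tau ptau by (simp add: eb divide_ennreal_pos)
    also have "1 / (\<tau>^n * V) = 1 / ((\<tau>+t)^n * V) * ((\<tau>+t)/\<tau>)^n"
      using tau t V by (simp add: field_simps power_divide)
    also have "IB H y \<tau> * ennreal (1 / ((\<tau>+t)^n * V) * ((\<tau>+t)/\<tau>)^n)
       = IB H y \<tau> * ennreal (1 / ((\<tau>+t)^n * V)) * ennreal (((\<tau>+t)/\<tau>)^n)"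
    proof -
      have "ennreal (1 / ((\<tau>+t)^n * V) * ((\<tau>+t)/\<tau>)^n) = ennreal (1 / ((\<tau>+t)^n * V)) * ennreal (((\<tau>+t)/\<tau>)^n)"
        using ptt tau t by (intro ennreal_mult) auto
      then show ?thesis by (simp only: mult.assoc)
    qed
    also have "\<dots> \<le> IB g y (\<tau>+t) * ennreal (1 / ((\<tau>+t)^n * V)) * ennreal (2^n)"
    proof (intro mult_mono ennreal_leI IBg)
      have "(\<tau>+t)/\<tau> \<le> 2" using tt tau by (simp add: field_simps)
      then show "((\<tau>+t)/\<tau>)^n \<le> 2^n" using tau t by (intro power_mono) auto
    qed auto
    also have "IB g y (\<tau>+t) * ennreal (1 / ((\<tau>+t)^n * V)) = IB g y (\<tau>+t) / emeasure lborel (ball y (\<tau>+t))"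
      using tau t ptt by (simp add: eb divide_ennreal_pos)
    also have "\<dots> \<le> ?U"
    proof -
      have "x \<in> ball y (\<tau>+t)" using y tau by (simp add: dist_commute)
      then show ?thesis unfolding g_def using tau t
        by (intro SUP_upper2[of "(y, \<tau>+t)"]) auto
    qed
    then have "IB g y (\<tau>+t) / emeasure lborel (ball y (\<tau>+t)) * ennreal (2^n) \<le> ennreal (2^n) * ?U"
      by (simp add: mult.commute mult_left_mono)
    finally show ?thesis by (simp add: add_increasing)
  qed
  then show ?thesis unfolding Mx_def[of H] n_def by (intro SUP_least) auto
qed

lemma R1:
  fixes P Q r :: real
  assumes P: "0 \<le> P" and Q: "0 \<le> Q" and r: "1 \<le> r"
  shows "(P + Q) powr (1/r) \<le> 2 * (P powr (1/r) + Q powr (1/r))"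
proof -
  define M where "M = max P Q"
  have M: "0 \<le> M" "P \<le> M" "Q \<le> M" using P Q by (auto simp: M_def)
  have "(P + Q) powr (1/r) \<le> (2 * M) powr (1/r)"
    using P Q M r by (intro powr_mono2) auto
  also have "\<dots> = 2 powr (1/r) * M powr (1/r)" using M by (simp add: powr_mult)
  also have "2 powr (1/r) \<le> 2 powr 1" using r by (intro powr_mono) auto
  then have "2 powr (1/r) * M powr (1/r) \<le> 2 * M powr (1/r)" by (intro mult_right_mono) auto
  also have "M powr (1/r) \<le> P powr (1/r) + Q powr (1/r)"
    unfolding M_def by (cases "P \<le> Q") (auto simp: max_def)
  finally show ?thesis by simp
qed

lemma enn_powr_mono: "a \<le> b \<Longrightarrow> 0 < p \<Longrightarrow> enn_powr a p \<le> enn_powr b p"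
proof (cases "b = top")
  case True then show ?thesis by (simp add: enn_powr_def)
next
  case False
  assume ab: "a \<le> b" and p: "0 < p"
  then have "a \<noteq> top" using False by (auto simp: top_unique)
  then show ?thesis using False ab p
    by (cases a; cases b) (auto simp: enn_powr_def intro!: ennreal_leI powr_mono2)
qed

lemma enn_powr_add: "0 < p \<Longrightarrow> enn_powr (a + b) p \<le> ennreal (2 powr p) * (enn_powr a p + enn_powr b p)"
proof (cases "a = top \<or> b = top")
  case True
  assume p: "0 < p"
  then show ?thesis using True by (auto simp: enn_powr_def ennreal_mult_top)
next
  case False
  assume p: "0 < p"
  then obtain A B where ab: "a = ennreal A" "b = ennreal B" "0 \<le> A" "0 \<le> B" using False
    by (cases a; cases b) auto
  define M where "M = max A B"
  have M: "0 \<le> M" "A \<le> M" "B \<le> M" using ab by (auto simp: M_def)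
  have "(A + B) powr p \<le> (2 * M) powr p" using ab M p by (intro powr_mono2) auto
  also have "\<dots> = 2 powr p * M powr p" using M by (simp add: powr_mult)
  also have "M powr p \<le> A powr p + B powr p" unfolding M_def by (cases "A \<le> B") (auto simp: max_def)
  finally have *: "(A + B) powr p \<le> 2 powr p * (A powr p + B powr p)" by simp
  have "enn_powr (a + b) p = ennreal ((A + B) powr p)" using ab by (simp add: enn_powr_ennreal flip: ennreal_plus)
  also have "\<dots> \<le> ennreal (2 powr p * (A powr p + B powr p))" by (rule ennreal_leI[OF *])
  also have "\<dots> = ennreal (2 powr p) * (enn_powr a p + enn_powr b p)"
    using ab by (simp add: enn_powr_ennreal ennreal_mult)
  finally show ?thesis .
qed

lemma final_real:
  fixes r l0 a0 u0 T K D :: real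
  assumes r: "1 < r" and l0: "0 \<le> l0" and a0: "0 \<le> a0" and u0: "0 \<le> u0" and T: "0 < T"
    and K: "0 \<le> K" and D: "0 < D"
    and le: "l0 \<le> 2 powr r * (K * a0 + (D * u0) powr r * T)"
  shows "(l0 / T) powr (1/r) \<le> (2 * (2 powr r * K * D) powr (1/r) + 4 * D) * (a0 / (D * T)) powr (1/r)
           + (2 * (2 powr r * K * D) powr (1/r) + 4 * D) * u0"
proof -
  define \<alpha> where "\<alpha> = a0 / (D * T)"
  have \<alpha>: "0 \<le> \<alpha>" using a0 D T by (simp add: \<alpha>_def)
  define P where "P = 2 powr r * K * D * \<alpha>"
  define Q where "Q = 2 powr r * (D * u0) powr r"
  have PQ: "0 \<le> P" "0 \<le> Q" using K D \<alpha> by (auto simp: P_def Q_def)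
  have "l0 / T \<le> 2 powr r * (K * a0 + (D * u0) powr r * T) / T" using le T by (simp add: divide_right_mono)
  also have "\<dots> = P + Q" unfolding P_def Q_def \<alpha>_def using T D by (simp add: field_simps)
  finally have "(l0 / T) powr (1/r) \<le> (P + Q) powr (1/r)" using l0 T r by (intro powr_mono2) auto
  also have "\<dots> \<le> 2 * (P powr (1/r) + Q powr (1/r))" using PQ r by (intro R1) auto
  also have "P powr (1/r) = (2 powr r * K * D) powr (1/r) * \<alpha> powr (1/r)"
    unfolding P_def using K D \<alpha> by (simp add: powr_mult)
  also have "Q powr (1/r) = 2 * (D * u0)"
  proof -
    have "Q = (2 * (D * u0)) powr r" unfolding Q_def using D u0 by (simp add: powr_mult)
    then show ?thesis using r D u0 by (simp add: powr_powr)
  qed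
  finally have "(l0 / T) powr (1/r) \<le> 2 * (2 powr r * K * D) powr (1/r) * \<alpha> powr (1/r) + 4 * D * u0"
    by (simp add: algebra_simps)
  also have "\<dots> \<le> (2 * (2 powr r * K * D) powr (1/r) + 4 * D) * \<alpha> powr (1/r)
           + (2 * (2 powr r * K * D) powr (1/r) + 4 * D) * u0"
    using D u0 \<alpha> by (intro add_mono mult_right_mono) auto
  finally show ?thesis unfolding \<alpha>_def .
qed

lemma ball_avg_IB: "ball_avg g c s = IB g c s / emeasure lborel (ball c s)"
  unfolding ball_avg_def IB_def by (simp add: nn_integral_completion)

lemma enn_powr_0: "enn_powr 0 p = 0"
  by (simp add: enn_powr_def)

theorem lemma4p1:
  fixes r :: real
  assumes "1 < r"
  shows "\<exists>C::real. C \<ge> 0 \<and> (\<forall>(x::'a::euclidean_space) t (f::'a \<Rightarrow> real).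
           t > 0 \<longrightarrow> locally_Lp r f \<longrightarrow>
           enn_powr (ball_avg (\<lambda>y. enn_powr (maximal_c f y) r) x t) (1 / r)
             \<le> ennreal C * enn_powr (ball_avg (\<lambda>y. ennreal (\<bar>f y\<bar> powr r)) x (2 * t)) (1 / r)
               + ennreal C * maximal_u (\<lambda>w. ball_avg (\<lambda>z. ennreal \<bar>f z\<bar>) w t) x)"
proof -
  have r: "1 < r" by (rule assms)
  define n where "n = DIM('a)"
  define V where "V = UV TYPE('a)"
  have V: "0 < V" unfolding V_def by (rule UV_pos)
  have eb: "\<And>c s. 0 \<le> s \<Longrightarrow> emeasure lborel (ball (c::'a) s) = ennreal (s^n * V)"
    unfolding n_def V_def by (rule emeasure_ball_UV)
  define K where "K = r * (2 * 5^n / (r-1) * 2 powr (r-1))"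
  define D :: real where "D = 2^n"
  define C where "C = 2 * (2 powr r * K * D) powr (1/r) + 4 * D"
  have K: "0 \<le> K" unfolding K_def using r by simp
  have D: "0 < D" unfolding D_def by simp
  have C: "0 < C" unfolding C_def using D by (simp add: add_nonneg_pos)
  show ?thesis
  proof (intro exI[of _ C] conjI allI impI)
    show "0 \<le> C" using C by simp
    fix x :: 'a and t :: real and f :: "'a \<Rightarrow> real"
    assume t: "0 < t" and lf: "locally_Lp r f"
    have fm: "f \<in> borel_measurable lebesgue" using lf by (simp add: locally_Lp_def)
    obtain f' where f': "f' \<in> borel_measurable lborel" and ae: "AE y in lborel. f y = f' y"
      using completion_ex_borel_measurable_real[OF fm] by blast
    have f'b[measurable]: "f' \<in> borel_measurable borel" using f' by simp
    define H where "H z = ennreal \<bar>f' z\<bar>" for z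
    have H[measurable]: "H \<in> borel_measurable borel" unfolding H_def by measurable
    have IBf: "IB (\<lambda>z. ennreal \<bar>f z\<bar>) c s = IB H c s" for c s
      unfolding IB_def H_def using ae by (intro nn_integral_cong_AE) auto
    have cvt_c: "maximal_c f y = Mx H y" for y
      unfolding maximal_c_def Mx_def ball_avg_IB IBf ..
    define g where "g w = IB H w t / emeasure lborel (ball w t)" for w
    define U where "U = (SUP p\<in>{(c, s). s > 0 \<and> x \<in> ball c s}. IB g (fst p) (snd p) / emeasure lborel (ball (fst p) (snd p)))"
    have cvt_u: "maximal_u (\<lambda>w. ball_avg (\<lambda>z. ennreal \<bar>f z\<bar>) w t) x = U"
    proof -
      have "(\<lambda>w. ball_avg (\<lambda>z. ennreal \<bar>f z\<bar>) w t) = g"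
        unfolding g_def ball_avg_IB IBf ..
      then show ?thesis unfolding maximal_u_def U_def ball_avg_IB by simp
    qed
    define A where "A = IB (\<lambda>y. enn_powr (H y) r) x (2*t)"
    have cvt_A: "ball_avg (\<lambda>y. ennreal (\<bar>f y\<bar> powr r)) x (2*t) = A / emeasure lborel (ball x (2*t))"
    proof -
      have "IB (\<lambda>y. ennreal (\<bar>f y\<bar> powr r)) x (2*t) = A"
        unfolding A_def IB_def H_def using ae by (intro nn_integral_cong_AE) (auto simp: enn_powr_ennreal)
      then show ?thesis by (simp add: ball_avg_IB)
    qed
    define L where "L = IB (\<lambda>y. enn_powr (Mx H y) r) x t"
    have cvt_L: "ball_avg (\<lambda>y. enn_powr (maximal_c f y) r) x t = L / emeasure lborel (ball x t)"
      unfolding ball_avg_IB L_def cvt_c ..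
    have "(\<integral>\<^sup>+ y\<in>cball x (2*t). ennreal (\<bar>f y\<bar> powr r) \<partial>lebesgue) < \<infinity>"
      using lf compact_cball[of x "2*t"] by (simp add: locally_Lp_def)
    also have "(\<integral>\<^sup>+ y\<in>cball x (2*t). ennreal (\<bar>f y\<bar> powr r) \<partial>lebesgue)
       = (\<integral>\<^sup>+ y. enn_powr (H y) r * indicator (cball x (2*t)) y \<partial>lborel)"
      unfolding nn_integral_completion H_def using ae
      by (intro nn_integral_cong_AE) (auto simp: enn_powr_ennreal)
    finally have Acb: "(\<integral>\<^sup>+ y. enn_powr (H y) r * indicator (cball x (2*t)) y \<partial>lborel) < top" by simp
    have "A \<le> (\<integral>\<^sup>+ y. enn_powr (H y) r * indicator (cball x (2*t)) y \<partial>lborel)"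
      unfolding A_def IB_def by (intro nn_integral_mono mult_left_mono) (auto simp: indicator_def)
    then have "A \<noteq> top" using Acb by (auto simp: top_unique)
    then obtain a0 where a0: "A = ennreal a0" "0 \<le> a0" by (cases A) auto
    define H1 where "H1 z = H z * indicator (ball x (2*t)) z" for z
    have H1[measurable]: "H1 \<in> borel_measurable borel" unfolding H1_def by measurable
    have AH1: "(\<integral>\<^sup>+ y. enn_powr (H1 y) r \<partial>lborel) = A"
      unfolding A_def IB_def H1_def using r
      by (intro nn_integral_cong) (auto simp: indicator_def enn_powr_0)
    have HL: "(\<integral>\<^sup>+ y. enn_powr (Mx H1 y) r \<partial>lborel) \<le> ennreal K * A"
      using HL_strong[OF H1 r] unfolding AH1 K_def n_def .
    show "enn_powr (ball_avg (\<lambda>y. enn_powr (maximal_c f y) r) x t) (1 / r)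
             \<le> ennreal C * enn_powr (ball_avg (\<lambda>y. ennreal (\<bar>f y\<bar> powr r)) x (2 * t)) (1 / r)
               + ennreal C * maximal_u (\<lambda>w. ball_avg (\<lambda>z. ennreal \<bar>f z\<bar>) w t) x"
    proof (cases "U = top")
      case True
      then show ?thesis unfolding cvt_u using C by (simp add: ennreal_mult_top)
    next
      case False
      then obtain u0 where u0: "U = ennreal u0" "0 \<le> u0" by (cases U) auto
      have pt: "enn_powr (Mx H y) r * indicator (ball x t) y \<le>
          ennreal (2 powr r) * enn_powr (Mx H1 y) r + ennreal (2 powr r * (D * u0) powr r) * indicator (ball x t) y" for y
      proof (cases "y \<in> ball x t")
        case False then show ?thesis by simp
      next
        case True
        have "Mx H y \<le> Mx H1 y + ennreal (2^DIM('a)) * U"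
          using pointwise_split[OF H t True] unfolding H1_def[abs_def] U_def g_def[abs_def] .
        also have "ennreal (2^DIM('a)) * U = ennreal (D * u0)"
          using u0 by (simp add: D_def n_def ennreal_mult)
        finally have "enn_powr (Mx H y) r \<le> enn_powr (Mx H1 y + ennreal (D * u0)) r"
          using r by (intro enn_powr_mono) auto
        also have "\<dots> \<le> ennreal (2 powr r) * (enn_powr (Mx H1 y) r + enn_powr (ennreal (D * u0)) r)"
          using r by (intro enn_powr_add) auto
        also have "\<dots> = ennreal (2 powr r) * enn_powr (Mx H1 y) r + ennreal (2 powr r * (D * u0) powr r)"
        proof -
          have e: "enn_powr (ennreal (D * u0)) r = ennreal ((D * u0) powr r)"
            using D u0 by (intro enn_powr_ennreal) simp
          have e2: "ennreal (2 powr r * (D * u0) powr r) = ennreal (2 powr r) * ennreal ((D * u0) powr r)"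
            by (intro ennreal_mult) auto
          show ?thesis by (simp only: e e2 distrib_left)
        qed
        finally show ?thesis using True by simp
      qed
      have "L \<le> (\<integral>\<^sup>+ y. ennreal (2 powr r) * enn_powr (Mx H1 y) r + ennreal (2 powr r * (D * u0) powr r) * indicator (ball x t) y \<partial>lborel)"
        unfolding L_def IB_def by (intro nn_integral_mono pt)
      also have "\<dots> = ennreal (2 powr r) * (\<integral>\<^sup>+ y. enn_powr (Mx H1 y) r \<partial>lborel) + ennreal (2 powr r * (D * u0) powr r) * emeasure lborel (ball x t)"
        by (subst nn_integral_add) (auto simp: nn_integral_cmult nn_integral_cmult_indicator)
      also have "\<dots> \<le> ennreal (2 powr r) * (ennreal K * ennreal a0) + ennreal (2 powr r * (D * u0) powr r) * ennreal (t^n * V)"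
        using HL a0 t by (intro add_mono mult_left_mono) (auto simp: eb)
      also have "\<dots> = ennreal (2 powr r * (K * a0 + (D * u0) powr r * (t^n * V)))"
        using K a0 D u0 t V by (simp add: ennreal_mult[symmetric] distrib_left flip: ennreal_plus)
      finally have Lle: "L \<le> ennreal (2 powr r * (K * a0 + (D * u0) powr r * (t^n * V)))" .
      then have "L \<noteq> top" by (auto simp: top_unique)
      then obtain l0 where l0: "L = ennreal l0" "0 \<le> l0" by (cases L) auto
      have l0le: "l0 \<le> 2 powr r * (K * a0 + (D * u0) powr r * (t^n * V))"
        using Lle l0 K a0 D u0 t V by (auto simp: ennreal_le_iff2)
      have T: "0 < t^n * V" using t V by simp
      have fr: "(l0 / (t^n * V)) powr (1/r) \<le> C * (a0 / (D * (t^n * V))) powr (1/r) + C * u0"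
        unfolding C_def by (rule final_real[OF r l0(2) a0(2) u0(2) T K D l0le])
      have LHS: "enn_powr (ball_avg (\<lambda>y. enn_powr (maximal_c f y) r) x t) (1 / r) = ennreal ((l0 / (t^n * V)) powr (1/r))"
        unfolding cvt_L l0 using t T l0 by (simp add: eb divide_ennreal enn_powr_ennreal)
      have "(2*t)^n * V = D * (t^n * V)" unfolding D_def by (simp add: power_mult_distrib)
      then have m2: "emeasure lborel (ball x (2*t)) = ennreal (D * (t^n * V))" using eb[of "2*t" x] t by (simp only:)
      have DT: "0 < D * (t^n * V)" using D T by simp
      have RA: "enn_powr (ball_avg (\<lambda>y. ennreal (\<bar>f y\<bar> powr r)) x (2 * t)) (1 / r) = ennreal ((a0 / (D * (t^n * V))) powr (1/r))"
        unfolding cvt_A a0 m2 divide_ennreal[OF a0(2) DT] using a0 DT by (intro enn_powr_ennreal) simp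
      have "ennreal ((l0 / (t^n * V)) powr (1/r)) \<le> ennreal (C * (a0 / (D * (t^n * V))) powr (1/r) + C * u0)"
        by (rule ennreal_leI[OF fr])
      also have "\<dots> = ennreal C * ennreal ((a0 / (D * (t^n * V))) powr (1/r)) + ennreal C * ennreal u0"
        using C u0 by (simp add: ennreal_mult)
      finally show ?thesis unfolding LHS RA cvt_u u0 .
    qed
  qed
qed

end
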